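(* For each natural number $N$ there exists $d_N>0$ such that for every complex $x$ with $|x|\ge d_N$ there exists $\theta\in\mathbb{C}$ with $|\theta|\le1$ such that \[ \log\Bigl(1-\sum_{n=1}^N\frac{n!}{x^n}\Bigr)^{-1}=\sum_{n=1}^N\frac{a_n}{n}\frac{1}{x^n}+\theta\,\frac{a_{N+1}}{N+1}\frac{1}{x^{N+1}}. \]
   Context: $\log$ denotes the principal branch of the logarithm. The integers $a_n$ are defined by $a_1=1$ and $a_n=n\cdot n!+\sum_{k=1}^{n-1}k!\,a_{n-k}$ for $n\ge2$; equivalently, as formal power series in $1/x$, $\log\bigl(1-\sum_{n\ge1}n!\,x^{-n}\bigr)^{-1}=\sum_{n\ge1}\frac{a_n}{n}x^{-n}$. *)

theory Defs
  imports "HOL-Complex_Analysis.Complex_Analysis"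
begin

text \<open>The integers a_n: a_1 = 1, a_n = n n! + sum_{k=1}^{n-1} k! a_{n-k}.
  (The general recursion also gives a_1 = 1; a_0 = 0 is an unused convention.)\<close>
fun seq_a :: "nat \<Rightarrow> int" where
  "seq_a 0 = 0"
| "seq_a (Suc m) = int (Suc m * fact (Suc m)) + (\<Sum>k\<in>{1..m}. fact k * seq_a (Suc m - k))"

lemma seq_a_1: "seq_a 1 = 1" by simp

end

theory Submission imports Defs begin
definition pf :: "nat \<Rightarrow> complex \<Rightarrow> complex" where
  "pf N y = (\<Sum>n=1..N. of_nat (fact n) * y ^ n)"

lemma pf_diff: "(pf N has_field_derivative deriv (pf N) y) (at y)"
proof -
  have "pf N holomorphic_on UNIV" unfolding pf_def by (intro holomorphic_intros)
  then show ?thesis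
    by (intro DERIV_deriv_iff_field_differentiable[THEN iffD2] holomorphic_on_imp_differentiable_at) auto
qed

lemma notnp: assumes "norm (w::complex) < 1" shows "1 - w \<notin> \<real>\<^sub>\<le>\<^sub>0" "inverse (1 - w) \<notin> \<real>\<^sub>\<le>\<^sub>0"
proof -
  have "Re w < 1" using assms abs_Re_le_cmod[of w] by linarith
  then have r: "Re (1 - w) > 0" by simp
  then show "1 - w \<notin> \<real>\<^sub>\<le>\<^sub>0" by (auto simp: complex_nonpos_Reals_iff)
  have "Re (inverse (1 - w)) > 0" using r by (simp add: Re_complex_div_gt_0 inverse_eq_divide)
  then show "inverse (1 - w) \<notin> \<real>\<^sub>\<le>\<^sub>0" by (auto simp: complex_nonpos_Reals_iff)
qed

lemma g_deriv: assumes "norm (pf N y) < 1"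
  shows "(1 - pf N y) * deriv (\<lambda>y. Ln (inverse (1 - pf N y))) y = deriv (pf N) y"
proof -
  have ne: "1 - pf N y \<noteq> 0" using assms by (metis norm_one right_minus_eq less_irrefl)
  have d1: "((\<lambda>y. inverse (1 - pf N y)) has_field_derivative
        (deriv (pf N) y / (1 - pf N y)^2)) (at y)"
    using pf_diff[of N y] ne
    by (auto intro!: derivative_eq_intros simp: power2_eq_square field_simps)
  have "((\<lambda>y. Ln (inverse (1 - pf N y))) has_field_derivative
        inverse (inverse (1 - pf N y)) * (deriv (pf N) y / (1 - pf N y)^2)) (at y)"
    by (rule DERIV_chain2[OF has_field_derivative_Ln d1]) (use notnp[OF assms] in simp)
  from DERIV_imp_deriv[OF this] have "deriv (\<lambda>y. Ln (inverse (1 - pf N y))) y =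
     inverse (inverse (1 - pf N y)) * (deriv (pf N) y / (1 - pf N y)^2)" .
  then show ?thesis using ne by (simp add: power2_eq_square)
qed
definition Fc :: "nat \<Rightarrow> nat \<Rightarrow> complex" where
  "Fc N i = (if 1 \<le> i \<and> i \<le> N then of_nat (fact i) else 0)"

lemma seq_a_Suc_c: "(of_int (seq_a (Suc m)) :: complex) =
   of_nat (Suc m) * of_nat (fact (Suc m)) + (\<Sum>k=1..m. of_nat (fact k) * of_int (seq_a (Suc m - k)))"
proof -
  have "(of_int (seq_a (Suc m)) :: complex) =
   of_nat (Suc m * fact (Suc m)) + (\<Sum>k=1..m. of_nat (fact k) * of_int (seq_a (Suc m - k)))"
    by (simp del: of_nat_mult of_nat_Suc fact_Suc add: of_int_sum)
  then show ?thesis by (simp only: of_nat_mult)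
qed

lemma comb1:
  assumes d: "\<And>j. d j = of_nat (j+1) * Fc N (j+1) + (\<Sum>i=0..j. Fc N i * d (j-i))"
  shows "j < N \<Longrightarrow> d j = of_int (seq_a (j+1))"
proof (induction j rule: less_induct)
  case (less j)
  have "(\<Sum>i=0..j. Fc N i * d (j-i)) = (\<Sum>i=1..j. Fc N i * d (j-i))"
    by (simp add: sum.atLeast_Suc_atMost Fc_def)
  also have "\<dots> = (\<Sum>k=1..j. of_nat (fact k) * of_int (seq_a (Suc j - k)))"
  proof (rule sum.cong)
    fix i assume i: "i \<in> {1..j}"
    then have "d (j - i) = of_int (seq_a (j - i + 1))" using less by auto
    moreover have "j - i + 1 = Suc j - i" using i by auto
    ultimately show "Fc N i * d (j-i) = of_nat (fact i) * of_int (seq_a (Suc j - i))"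
      using i less.prems by (simp add: Fc_def del: seq_a.simps)
  qed simp
  finally show ?case using d[of j] less.prems seq_a_Suc_c[of j]
    by (simp add: Fc_def del: of_nat_Suc fact_Suc)
qed

lemma comb2:
  assumes d: "\<And>j. d j = of_nat (j+1) * Fc N (j+1) + (\<Sum>i=0..j. Fc N i * d (j-i))"
  shows "d N = of_int (seq_a (N+1)) - of_nat ((N+1) * fact (N+1))"
proof -
  have "(\<Sum>i=0..N. Fc N i * d (N-i)) = (\<Sum>i=1..N. Fc N i * d (N-i))"
    by (simp add: sum.atLeast_Suc_atMost Fc_def)
  also have "\<dots> = (\<Sum>k=1..N. of_nat (fact k) * of_int (seq_a (Suc N - k)))"
  proof (rule sum.cong)
    fix i assume i: "i \<in> {1..N}"
    then have "d (N - i) = of_int (seq_a (N - i + 1))" using comb1[OF d] by auto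
    moreover have "N - i + 1 = Suc N - i" using i by auto
    ultimately show "Fc N i * d (N-i) = of_nat (fact i) * of_int (seq_a (Suc N - i))"
      using i by (simp add: Fc_def del: seq_a.simps)
  qed simp
  finally show ?thesis using d[of N] seq_a_Suc_c[of N]
    by (simp add: Fc_def del: of_nat_Suc fact_Suc)
qed

lemma seq_a_nonneg: "seq_a n \<ge> 0"
proof (induction n rule: less_induct)
  case (less n)
  show ?case
  proof (cases n)
    case (Suc m)
    have "(\<Sum>k=1..m. fact k * seq_a (Suc m - k)) \<ge> 0"
      using less Suc by (intro sum_nonneg mult_nonneg_nonneg) auto
    then show ?thesis using Suc by simp
  qed simp
qed

lemma seq_a_ge: "seq_a (Suc m) \<ge> int (Suc m * fact (Suc m))"
proof -
  have "(\<Sum>k=1..m. fact k * seq_a (Suc m - k)) \<ge> 0"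
    using seq_a_nonneg by (intro sum_nonneg mult_nonneg_nonneg) auto
  then show ?thesis by (simp only: seq_a.simps)
qed

definition Pp :: "nat \<Rightarrow> complex \<Rightarrow> complex" where
  "Pp N y = (\<Sum>n=1..N. of_int (seq_a n) / of_nat n * y ^ n)"

lemma pf_exp: "pf N has_fps_expansion Abs_fps (Fc N)"
proof -
  have "pf N has_fps_expansion (\<Sum>n\<in>{1..N}. fps_const (of_nat (fact n)) * fps_X ^ n)"
    unfolding pf_def by (intro has_fps_expansion_sum has_fps_expansion_cmult_left has_fps_expansion_fps_X_power)
  moreover have "(\<Sum>n\<in>{1..N}. fps_const (of_nat (fact n)) * fps_X ^ n) = Abs_fps (Fc N)"
    by (rule fps_ext) (auto simp: Fc_def fps_sum_nth fps_X_power_nth if_distrib sum.delta cong: if_cong)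
  ultimately show ?thesis by simp
qed

lemma Pp_exp: "Pp N has_fps_expansion
   Abs_fps (\<lambda>k. if 1 \<le> k \<and> k \<le> N then of_int (seq_a k) / of_nat k else 0)"
proof -
  have "Pp N has_fps_expansion (\<Sum>n\<in>{1..N}. fps_const (of_int (seq_a n) / of_nat n) * fps_X ^ n)"
    unfolding Pp_def by (intro has_fps_expansion_sum has_fps_expansion_cmult_left has_fps_expansion_fps_X_power)
  moreover have "(\<Sum>n\<in>{1..N}. fps_const (of_int (seq_a n) / of_nat n) * fps_X ^ n :: complex fps) = 
     Abs_fps (\<lambda>k. if 1 \<le> k \<and> k \<le> N then of_int (seq_a k) / of_nat k else 0)"
    by (rule fps_ext) (auto simp: fps_sum_nth fps_X_power_nth if_distrib sum.delta cong: if_cong)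
  ultimately show ?thesis by simp
qed

lemma local_exp:
  fixes N :: nat
  defines "g \<equiv> (\<lambda>y. Ln (inverse (1 - pf N y)))"
  defines "A \<equiv> real_of_int (seq_a (N+1)) / real (N+1)"
  shows "\<exists>r>0. \<forall>y. norm y < r \<longrightarrow>
     (\<exists>h. norm h \<le> A \<and> g y = Pp N y + h * y ^ (N+1))"
proof -
  define G where "G = fps_expansion g 0"
  define Fp where "Fp = Abs_fps (Fc N)"
  have ana: "g analytic_on {0}" unfolding g_def pf_def by (auto intro!: analytic_intros)
  have hG: "g has_fps_expansion G" unfolding G_def by (rule analytic_at_imp_has_fps_expansion_0[OF ana])
  have hF: "pf N has_fps_expansion Fp" unfolding Fp_def by (rule pf_exp)
  have h1: "(\<lambda>y. (1 - pf N y) * deriv g y) has_fps_expansion (1 - Fp) * fps_deriv G"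
    by (intro has_fps_expansion_mult has_fps_expansion_diff has_fps_expansion_1 hF has_fps_expansion_deriv hG)
  have h2: "deriv (pf N) has_fps_expansion fps_deriv Fp"
    by (intro has_fps_expansion_deriv hF)
  have op: "open {y. norm (pf N y) < 1}"
    unfolding pf_def by (intro open_Collect_less continuous_intros)
  have ev: "eventually (\<lambda>y. norm (pf N y) < 1) (nhds 0)"
    using eventually_nhds_in_open[OF op, of 0] by (simp add: pf_def)
  have ev2: "eventually (\<lambda>y. (1 - pf N y) * deriv g y = deriv (pf N) y) (nhds 0)"
    using ev by eventually_elim (simp add: g_def g_deriv)
  have h3: "(\<lambda>y. (1 - pf N y) * deriv g y) has_fps_expansion fps_deriv Fp"
    using has_fps_expansion_cong[OF ev2 refl] h2 by simp
  have feq: "(1 - Fp) * fps_deriv G = fps_deriv Fp"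
    by (rule fps_expansion_unique_complex[OF h1 h3])
  define d where "d j = fps_deriv G $ j" for j
  have drec: "d j = of_nat (j+1) * Fc N (j+1) + (\<Sum>i=0..j. Fc N i * d (j-i))" for j
  proof -
    have e1: "(1 - Fp) * fps_deriv G = fps_deriv G - Fp * fps_deriv G" by (simp add: algebra_simps)
    have e2: "(Fp * fps_deriv G) $ j = (\<Sum>i=0..j. Fc N i * d (j-i))"
      by (simp only: fps_mult_nth Fp_def d_def fps_nth_Abs_fps)
    have e3: "fps_deriv Fp $ j = of_nat (j+1) * Fc N (j+1)" by (simp add: Fp_def)
    have "((1 - Fp) * fps_deriv G) $ j = fps_deriv Fp $ j" using feq by simp
    then have "d j - (\<Sum>i=0..j. Fc N i * d (j-i)) = of_nat (j+1) * Fc N (j+1)"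
      unfolding e1 fps_sub_nth e2 e3 d_def .
    then show ?thesis by (simp add: algebra_simps)
  qed
  have Gn: "G $ n = d (n-1) / of_nat n" if "n \<ge> 1" for n
  proof -
    have "d (n-1) = of_nat n * G $ n" using that by (simp add: d_def)
    then show ?thesis using that by simp
  qed
  have G0: "G $ 0 = 0"
    using fps_nth_fps_expansion[OF hG, of 0] by (simp add: g_def pf_def)
  define Q :: "complex fps" where
    "Q = Abs_fps (\<lambda>k. if 1 \<le> k \<and> k \<le> N then of_int (seq_a k) / of_nat k else 0)"
  define E where "E = G - Q"
  have hE: "(\<lambda>y. g y - Pp N y) has_fps_expansion E"
    unfolding E_def Q_def by (intro has_fps_expansion_diff hG Pp_exp)
  have Ek: "E $ k = 0" if "k \<le> N" for k
  proof (cases "k = 0")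
    case True then show ?thesis by (simp add: E_def Q_def G0)
  next
    case False
    then have "d (k-1) = of_int (seq_a k)" using that comb1[OF drec, of "k-1"] by (simp del: seq_a.simps)
    then show ?thesis using False that by (simp add: E_def Q_def Gn del: seq_a.simps)
  qed
  have EN: "E $ (N+1) = (of_int (seq_a (N+1)) - of_nat ((N+1) * fact (N+1))) / of_nat (N+1)"
    using comb2[OF drec] by (simp add: E_def Q_def Gn del: of_nat_Suc fact_Suc)
  define H where "H = fps_shift (N+1) E"
  have EH: "E = H * fps_X ^ (N+1)"
  proof (rule fps_ext)
    fix n
    show "E $ n = (H * fps_X ^ (N+1)) $ n"
      unfolding fps_X_power_mult_right_nth by (auto simp: H_def Ek simp del: power_Suc)
  qed
  have rad: "fps_conv_radius E > 0" and ev3: "eventually (\<lambda>y. eval_fps E y = g y - Pp N y) (nhds 0)"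
    using hE by (auto simp: has_fps_expansion_def)
  have ev4: "eventually (\<lambda>y. y \<in> eball 0 (fps_conv_radius E)) (nhds 0)"
    by (rule eventually_nhds_in_open) (use rad in \<open>auto simp: zero_ereal_def\<close>)
  have radH: "fps_conv_radius H = fps_conv_radius E" by (simp add: H_def)
  have "isCont (eval_fps H) 0"
    by (rule continuous_eval_fps) (use rad radH in \<open>simp add: zero_ereal_def\<close>)
  then have lim: "(eval_fps H \<longlongrightarrow> H $ 0) (at 0)"
    by (simp add: isCont_def eval_fps_at_0)
  have H0: "H $ 0 = complex_of_real ((real_of_int (seq_a (N+1)) - real ((N+1) * fact (N+1))) / real (N+1))"
    unfolding H_def using EN by simp
  have ge: "real_of_int (seq_a (N+1)) \<ge> real ((N+1) * fact (N+1))"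
  proof -
    have "real_of_int (int ((N+1)*fact(N+1))) \<le> real_of_int (seq_a (N+1))"
      using seq_a_ge[of N] by (simp only: of_int_le_iff Suc_eq_plus1)
    then show ?thesis by (simp only: of_int_of_nat_eq)
  qed
  have fpos: "real ((N+1) * fact (N+1)) > 0" by (simp only: of_nat_0_less_iff) (simp del: fact_Suc)
  have nH0: "norm (H $ 0) < A"
    unfolding H0 norm_of_real A_def using ge fpos
    by (simp add: divide_strict_right_mono del: of_nat_mult fact_Suc of_nat_Suc)
  have "eventually (\<lambda>y. norm (eval_fps H y) < A) (at 0)"
    using order_tendstoD(2)[OF tendsto_norm[OF lim] nH0] .
  then have ev5: "eventually (\<lambda>y. norm (eval_fps H y) < A) (nhds 0)"
    using nH0 by (auto simp: eventually_at_filter eval_fps_at_0 elim: eventually_mono)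
  have "eventually (\<lambda>y. \<exists>h. norm h \<le> A \<and> g y = Pp N y + h * y ^ (N+1)) (nhds 0)"
    using ev3 ev4 ev5
  proof eventually_elim
    case (elim y)
    have "eval_fps E y = eval_fps H y * eval_fps (fps_X ^ (N+1)) y"
      unfolding EH using elim(2) radH by (intro eval_fps_mult) (auto simp del: power_Suc)
    then have "g y - Pp N y = eval_fps H y * y ^ (N+1)" using elim(1)
      by (simp only: eval_fps_X_power)
    then have "g y = Pp N y + eval_fps H y * y ^ (N+1)" by (simp add: algebra_simps)
    then show ?case using elim(3) by (intro exI[of _ "eval_fps H y"]) auto
  qed
  then show ?thesis by (auto simp: eventually_nhds_metric dist_norm)
qed

theorem proposition5p5:
  fixes N :: nat
  shows "\<exists>d>0. \<forall>x::complex. norm x \<ge> d \<longrightarrow>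
           (\<exists>\<theta>::complex. norm \<theta> \<le> 1 \<and>
              Ln (inverse (1 - (\<Sum>n=1..N. of_nat (fact n) / x ^ n))) =
                (\<Sum>n=1..N. of_int (seq_a n) / of_nat n * (1 / x ^ n))
                + \<theta> * (of_int (seq_a (N+1)) / of_nat (N+1)) * (1 / x ^ (N+1)))"
proof -
  define A where "A = real_of_int (seq_a (N+1)) / real (N+1)"
  obtain r where r: "r > 0" and hr: "\<And>y. norm y < r \<Longrightarrow>
     (\<exists>h. norm h \<le> A \<and> Ln (inverse (1 - pf N y)) = Pp N y + h * y ^ (N+1))"
    using local_exp[of N] unfolding A_def by blast
  have "seq_a (N+1) \<ge> int ((N+1) * fact (N+1))" using seq_a_ge[of N] by simp
  moreover have "int ((N+1) * fact (N+1)) > 0" by (simp only: of_nat_0_less_iff) (simp del: fact_Suc)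
  ultimately have "seq_a (N+1) > 0" by linarith
  then have "real_of_int (seq_a (N+1)) > 0" by (simp only: of_int_0_less_iff)
  then have Apos: "A > 0" unfolding A_def by (intro divide_pos_pos) auto
  have Ac: "(of_int (seq_a (N+1)) / of_nat (N+1) :: complex) = complex_of_real A"
    by (simp add: A_def)
  show ?thesis
  proof (intro exI[of _ "2 / r"] conjI allI impI)
    show "2 / r > 0" using r by simp
    fix x :: complex assume x: "norm x \<ge> 2 / r"
    have x0: "x \<noteq> 0" using x r by (auto simp: divide_pos_pos) 
    have "norm x > 0" using x0 by simp
    define y where "y = 1 / x"
    have "norm y = 1 / norm x" by (simp add: y_def norm_divide)
    also have "\<dots> \<le> r / 2" using x r \<open>norm x > 0\<close> by (simp add: field_simps)
    also have "\<dots> < r" using r by simp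
    finally obtain h where h: "norm h \<le> A" and eq: "Ln (inverse (1 - pf N y)) = Pp N y + h * y ^ (N+1)"
      using hr by blast
    have s1: "(\<Sum>n=1..N. of_nat (fact n) / x ^ n) = pf N y"
      unfolding pf_def y_def by (intro sum.cong) (auto simp: power_one_over)
    have s2: "(\<Sum>n=1..N. of_int (seq_a n) / of_nat n * (1 / x ^ n)) = Pp N y"
      unfolding Pp_def y_def by (intro sum.cong) (auto simp: power_one_over)
    show "\<exists>\<theta>::complex. norm \<theta> \<le> 1 \<and>
              Ln (inverse (1 - (\<Sum>n=1..N. of_nat (fact n) / x ^ n))) =
                (\<Sum>n=1..N. of_int (seq_a n) / of_nat n * (1 / x ^ n))
                + \<theta> * (of_int (seq_a (N+1)) / of_nat (N+1)) * (1 / x ^ (N+1))"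
    proof (intro exI[of _ "h / complex_of_real A"] conjI)
      show "norm (h / complex_of_real A) \<le> 1"
        using h Apos by (simp add: norm_divide field_simps)
      have "h / complex_of_real A * complex_of_real A * (1 / x ^ (N+1)) = h * y ^ (N+1)"
        using Apos by (simp add: y_def power_one_over)
      then show "Ln (inverse (1 - (\<Sum>n=1..N. of_nat (fact n) / x ^ n))) =
                (\<Sum>n=1..N. of_int (seq_a n) / of_nat n * (1 / x ^ n))
                + h / complex_of_real A * (of_int (seq_a (N+1)) / of_nat (N+1)) * (1 / x ^ (N+1))"
        unfolding s1 s2 Ac eq by simp
    qed
  qed
qed
end
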